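(* Let $p$ be a prime, $d\ge2$, $1\le k<d$, and write $x=(x_1,x_2)\in\mathbb{Z}_p^k\times\mathbb{Z}_p^{d-k}$. Let $A=\mathbb{Z}_p^k\times\{0\}\subseteq\mathbb{Z}_p^d$ and $B=\{0\}\times\mathbb{Z}_p^{d-k}\subseteq\mathbb{Z}_p^d$, and let $g\in L^2(\mathbb{Z}_p^d)$ with $\|g\|_2=1$. Then the Gabor system $\mathcal{G}(g,A,B)$ is an orthonormal basis of $L^2(\mathbb{Z}_p^d)$ if and only if both of the following hold: (a) for every $x_2\in\mathbb{Z}_p^{d-k}$, the function $m\mapsto\left|\sum_{x_1\in\mathbb{Z}_p^k}g(x_1,x_2)\chi(-x_1\cdot m)\right|$ is constant on $\mathbb{Z}_p^k$ (the constant may depend on $x_2$); (b) the function $x_2\mapsto\sum_{x_1\in\mathbb{Z}_p^k}|g(x_1,x_2)|^2$ is constant on $\mathbb{Z}_p^{d-k}$.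
   Context: $\mathbb{Z}_p^n$ is the $n$-dimensional vector space over the field $\mathbb{Z}_p$ ($p$ prime), $x\cdot b=\sum_i x_ib_i$, and $\chi(t)=e^{2\pi i t/p}$. $L^2(\mathbb{Z}_p^d)$ is the space of functions $\mathbb{Z}_p^d\to\mathbb{C}$ with inner product $\langle f,h\rangle=\sum_{x} f(x)\overline{h(x)}$. The Gabor system is $\mathcal{G}(g,A,B)=\{x\mapsto g(x-a)\chi(x\cdot b)\}_{a\in A,\ b\in B}$. *)

theory Defs
  imports Complex_Main "HOL-Computational_Algebra.Primes"
begin

text \<open>Elements of Z_p^d are encoded as functions nat => int with entries in
  {0..<p} at coordinates i < d and 0 at coordinates i >= d.\<close>

definition Zpv :: "nat \<Rightarrow> nat \<Rightarrow> (nat \<Rightarrow> int) set" where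
  "Zpv p d = {x. (\<forall>i<d. 0 \<le> x i \<and> x i < int p) \<and> (\<forall>i\<ge>d. x i = 0)}"

definition vsub :: "nat \<Rightarrow> (nat \<Rightarrow> int) \<Rightarrow> (nat \<Rightarrow> int) \<Rightarrow> (nat \<Rightarrow> int)" where
  "vsub p x y = (\<lambda>i. (x i - y i) mod int p)"

definition vadd :: "nat \<Rightarrow> (nat \<Rightarrow> int) \<Rightarrow> (nat \<Rightarrow> int) \<Rightarrow> (nat \<Rightarrow> int)" where
  "vadd p x y = (\<lambda>i. (x i + y i) mod int p)"

definition dotp :: "nat \<Rightarrow> (nat \<Rightarrow> int) \<Rightarrow> (nat \<Rightarrow> int) \<Rightarrow> int" where
  "dotp d x y = (\<Sum>i<d. x i * y i)"

definition chi :: "nat \<Rightarrow> int \<Rightarrow> complex" where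
  "chi p t = exp (2 * of_real pi * \<i> * of_int t / of_nat p)"

definition l2inner :: "(nat \<Rightarrow> int) set \<Rightarrow> ((nat \<Rightarrow> int) \<Rightarrow> complex) \<Rightarrow> ((nat \<Rightarrow> int) \<Rightarrow> complex) \<Rightarrow> complex" where
  "l2inner V f h = (\<Sum>x\<in>V. f x * cnj (h x))"

definition gabor_atom :: "nat \<Rightarrow> nat \<Rightarrow> ((nat \<Rightarrow> int) \<Rightarrow> complex) \<Rightarrow> (nat \<Rightarrow> int) \<Rightarrow> (nat \<Rightarrow> int) \<Rightarrow> (nat \<Rightarrow> int) \<Rightarrow> complex" where
  "gabor_atom p d g a b = (\<lambda>x. g (vsub p x a) * chi p (dotp d x b))"

definition is_onb :: "(nat \<Rightarrow> int) set \<Rightarrow> 'i set \<Rightarrow> ('i \<Rightarrow> (nat \<Rightarrow> int) \<Rightarrow> complex) \<Rightarrow> bool" where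
  "is_onb V I e \<longleftrightarrow>
     (\<forall>i\<in>I. \<forall>j\<in>I. l2inner V (e i) (e j) = (if i = j then 1 else 0)) \<and>
     (\<forall>f. \<exists>c. \<forall>x\<in>V. f x = (\<Sum>i\<in>I. c i * e i x))"

definition gabor_onb :: "nat \<Rightarrow> nat \<Rightarrow> ((nat \<Rightarrow> int) \<Rightarrow> complex) \<Rightarrow> (nat \<Rightarrow> int) set \<Rightarrow> (nat \<Rightarrow> int) set \<Rightarrow> bool" where
  "gabor_onb p d g A B = is_onb (Zpv p d) (A \<times> B) (\<lambda>(a, b). gabor_atom p d g a b)"

end

theory Submission
  imports Defs "HOL-Analysis.Analysis"
begin

lemma chi_add: "chi p (s + t) = chi p s * chi p t"
  unfolding chi_def by (simp add: exp_add[symmetric] add_divide_distrib distrib_left distrib_right)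

lemma chi_zero[simp]: "chi p 0 = 1"
  unfolding chi_def by simp

lemma cnj_chi: "cnj (chi p t) = chi p (- t)"
  unfolding chi_def by (simp add: exp_cnj)

lemma chi_eq_1_iff:
  assumes "p > 0" shows "chi p t = 1 \<longleftrightarrow> int p dvd t"
proof -
  have "chi p t = 1 \<longleftrightarrow> (\<exists>n::int. 2 * pi * of_int t / of_nat p = of_int (2 * n) * pi)"
    unfolding chi_def exp_eq_1 by simp
  also have "\<dots> \<longleftrightarrow> (\<exists>n::int. t = n * int p)"
  proof
    assume "\<exists>n::int. 2 * pi * of_int t / of_nat p = of_int (2 * n) * pi"
    then obtain n::int where "2 * pi * of_int t / of_nat p = of_int (2 * n) * pi" by blast
    hence "2 * pi * of_int t = of_int (2 * n) * pi * of_nat p" using assms by (simp add: field_simps)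
    hence "real_of_int t = of_int n * of_nat p" by (simp add: algebra_simps)
    hence "t = n * int p" by (metis of_int_eq_iff of_int_mult of_int_of_nat_eq)
    thus "\<exists>n::int. t = n * int p" by blast
  next
    assume "\<exists>n::int. t = n * int p"
    then obtain n::int where "t = n * int p" by blast
    thus "\<exists>n::int. 2 * pi * of_int t / of_nat p = of_int (2 * n) * pi" using assms
      by (intro exI[of _ n]) (simp add: field_simps)
  qed
  also have "\<dots> \<longleftrightarrow> int p dvd t" by (auto simp: dvd_def mult.commute)
  finally show ?thesis .
qed

lemma chi_cong:
  assumes "p > 0" "int p dvd (s - t)" shows "chi p s = chi p t"
proof -
  have "chi p s = chi p (t + (s - t))" by simp
  also have "\<dots> = chi p t" using chi_eq_1_iff[OF assms(1)] assms(2) by (simp only: chi_add) simp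
  finally show ?thesis .
qed


definition Sub :: "nat \<Rightarrow> nat set \<Rightarrow> (nat \<Rightarrow> int) set" where
  "Sub p J = {x. (\<forall>i\<in>J. 0 \<le> x i \<and> x i < int p) \<and> (\<forall>i. i \<notin> J \<longrightarrow> x i = 0)}"

lemma Sub_finite: "finite J \<Longrightarrow> finite (Sub p J)"
proof -
  assume J: "finite J"
  have "Sub p J \<subseteq> (\<lambda>f i. if i \<in> J then f i else 0) ` PiE J (\<lambda>_. {0..<int p})"
  proof
    fix x assume x: "x \<in> Sub p J"
    have "x = (\<lambda>i. if i \<in> J then restrict x J i else 0)" using x by (auto simp: Sub_def)
    moreover have "restrict x J \<in> PiE J (\<lambda>_. {0..<int p})" using x by (auto simp: Sub_def)
    ultimately show "x \<in> (\<lambda>f i. if i \<in> J then f i else 0) ` PiE J (\<lambda>_. {0..<int p})" by blast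
  qed
  moreover have "finite (PiE J (\<lambda>_. {0..<int p}))" using J by (intro finite_PiE) auto
  ultimately show ?thesis by (meson finite_imageI finite_subset)
qed

lemma zero_Sub[simp]: "(\<lambda>i. 0) \<in> Sub p J \<longleftrightarrow> p > 0 \<or> J = {}"
  by (auto simp: Sub_def)

lemma Sub_card_pos: "finite J \<Longrightarrow> p > 0 \<Longrightarrow> card (Sub p J) > 0"
  using Sub_finite[of J p] zero_Sub[of p J] by (metis card_gt_0_iff empty_iff)

lemma vsub_Sub: "p > 0 \<Longrightarrow> x \<in> Sub p J \<Longrightarrow> y \<in> Sub p J \<Longrightarrow> vsub p x y \<in> Sub p J"
  by (auto simp: Sub_def vsub_def)

lemma vadd_Sub: "p > 0 \<Longrightarrow> x \<in> Sub p J \<Longrightarrow> y \<in> Sub p J \<Longrightarrow> vadd p x y \<in> Sub p J"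
  by (auto simp: Sub_def vadd_def)

lemma Sub_mod: "x \<in> Sub p J \<Longrightarrow> x i mod int p = x i"
  by (cases "i \<in> J") (auto simp: Sub_def)

lemma vsub_vadd: "x \<in> Sub p J \<Longrightarrow> vsub p (vadd p x y) y = x"
  using Sub_mod[of x p J] by (auto simp: vsub_def vadd_def mod_diff_left_eq)

lemma vadd_vsub: "x \<in> Sub p J \<Longrightarrow> vadd p (vsub p x y) y = x"
  using Sub_mod[of x p J] by (auto simp: vsub_def vadd_def mod_add_left_eq)

lemma vsub_vsub: "a \<in> Sub p J \<Longrightarrow> vsub p x (vsub p x a) = a"
  using Sub_mod[of a p J] by (auto simp: vsub_def mod_diff_right_eq)

lemma vsub_zero: "x \<in> Sub p J \<Longrightarrow> vsub p x (\<lambda>i. 0) = x"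
  using Sub_mod[of x p J] by (auto simp: vsub_def)

lemma vsub_eq_0_iff: "x \<in> Sub p J \<Longrightarrow> y \<in> Sub p J \<Longrightarrow> vsub p x y = (\<lambda>i. 0) \<longleftrightarrow> x = y"
proof
  assume x: "x \<in> Sub p J" and y: "y \<in> Sub p J" and e: "vsub p x y = (\<lambda>i. 0)"
  show "x = y"
  proof
    fix i
    have "(x i - y i) mod int p = 0" using e unfolding vsub_def by meson
    hence "x i mod int p = y i mod int p" by (simp add: mod_eq_dvd_iff dvd_eq_mod_eq_0)
    thus "x i = y i" using Sub_mod[OF x] Sub_mod[OF y] by simp
  qed
qed (simp add: vsub_def)

lemma sum_vadd_shift:
  assumes "p > 0" "u \<in> Sub p J"
  shows "(\<Sum>x\<in>Sub p J. h (vadd p x u)) = (\<Sum>x\<in>Sub p J. h x)"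
  by (rule sum.reindex_bij_witness[where i="\<lambda>x. vsub p x u" and j="\<lambda>x. vadd p x u"])
     (use assms in \<open>auto simp: vsub_vadd vadd_vsub vsub_Sub vadd_Sub\<close>)

lemma sum_vsub_shift:
  assumes "p > 0" "u \<in> Sub p J"
  shows "(\<Sum>x\<in>Sub p J. h (vsub p x u)) = (\<Sum>x\<in>Sub p J. h x)"
  by (rule sum.reindex_bij_witness[where i="\<lambda>x. vadd p x u" and j="\<lambda>x. vsub p x u"])
     (use assms in \<open>auto simp: vsub_vadd vadd_vsub vsub_Sub vadd_Sub\<close>)

lemma sum_vsub_refl:
  assumes "p > 0" "x \<in> Sub p J"
  shows "(\<Sum>a\<in>Sub p J. h (vsub p x a)) = (\<Sum>a\<in>Sub p J. h a)"
  by (rule sum.reindex_bij_witness[where i="\<lambda>a. vsub p x a" and j="\<lambda>a. vsub p x a"])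
     (use assms in \<open>auto simp: vsub_vsub vsub_Sub\<close>)

lemma chi_dotp_vsub:
  assumes "p > 0"
  shows "chi p (dotp d (vsub p x y) m) = chi p (dotp d x m - dotp d y m)"
proof (rule chi_cong[OF assms])
  have "dotp d (vsub p x y) m - (dotp d x m - dotp d y m) = (\<Sum>i<d. ((x i - y i) mod int p - (x i - y i)) * m i)"
    by (simp add: dotp_def vsub_def sum_subtractf[symmetric] algebra_simps)
  also have "int p dvd \<dots>"
    by (intro dvd_sum dvd_mult2) (metis mod_mod_trivial mod_eq_dvd_iff)
  finally show "int p dvd dotp d (vsub p x y) m - (dotp d x m - dotp d y m)" .
qed

lemma chi_dotp_vadd:
  assumes "p > 0"
  shows "chi p (dotp d (vadd p x y) m) = chi p (dotp d x m + dotp d y m)"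
proof (rule chi_cong[OF assms])
  have "dotp d (vadd p x y) m - (dotp d x m + dotp d y m) = (\<Sum>i<d. ((x i + y i) mod int p - (x i + y i)) * m i)"
    by (simp add: dotp_def vadd_def sum_subtractf[symmetric] sum.distrib[symmetric] algebra_simps)
  also have "int p dvd \<dots>"
    by (intro dvd_sum dvd_mult2) (metis mod_mod_trivial mod_eq_dvd_iff)
  finally show "int p dvd dotp d (vadd p x y) m - (dotp d x m + dotp d y m)" .
qed

lemma dotp_commute: "dotp d x y = dotp d y x"
  by (simp add: dotp_def mult.commute)


lemma orth:
  assumes p2: "p \<ge> 2" and J: "finite J" "J \<subseteq> {..<d}"
  shows "(\<Sum>x\<in>Sub p J. chi p (dotp d x c)) =
         (if \<forall>i\<in>J. int p dvd c i then of_nat (card (Sub p J)) else 0)"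
proof (cases "\<forall>i\<in>J. int p dvd c i")
  case True
  have "chi p (dotp d x c) = 1" if x: "x \<in> Sub p J" for x
  proof -
    have "int p dvd dotp d x c" unfolding dotp_def
    proof (intro dvd_sum)
      fix i show "int p dvd x i * c i"
        using True x by (cases "i \<in> J") (auto simp: Sub_def)
    qed
    thus ?thesis using chi_eq_1_iff p2 by simp
  qed
  thus ?thesis using True by simp
next
  case False
  then obtain i0 where i0: "i0 \<in> J" "\<not> int p dvd c i0" by blast
  define e where "e = (\<lambda>i. if i = i0 then 1 else 0::int)"
  have eS: "e \<in> Sub p J" using i0 p2 by (auto simp: Sub_def e_def)
  have de: "dotp d x e = x i0" for x
    using i0 J by (simp add: dotp_def e_def if_distrib cong: if_cong) (auto simp: sum.delta)
  let ?S = "\<Sum>x\<in>Sub p J. chi p (dotp d x c)"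
  have "?S = (\<Sum>x\<in>Sub p J. chi p (dotp d (vadd p x e) c))"
    using sum_vadd_shift[OF _ eS, of "\<lambda>x. chi p (dotp d x c)"] p2 by simp
  also have "\<dots> = (\<Sum>x\<in>Sub p J. chi p (dotp d x c) * chi p (c i0))"
    using p2 by (simp add: chi_dotp_vadd chi_add dotp_commute[of d e c] de)
  also have "\<dots> = chi p (c i0) * ?S" by (simp add: sum_distrib_left mult.commute)
  finally have "(1 - chi p (c i0)) * ?S = 0" by (simp add: algebra_simps)
  moreover have "chi p (c i0) \<noteq> 1" using i0 p2 chi_eq_1_iff by simp
  ultimately show ?thesis using False by auto
qed


lemma Sub_dvd_eq:
  assumes "x \<in> Sub p J" "y \<in> Sub p J"
  shows "(\<forall>i\<in>J. int p dvd (x i - y i)) \<longleftrightarrow> x = y"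
proof
  assume h: "\<forall>i\<in>J. int p dvd (x i - y i)"
  show "x = y"
  proof
    fix i show "x i = y i"
    proof (cases "i \<in> J")
      case True
      hence "x i mod int p = y i mod int p" using h by (simp add: mod_eq_dvd_iff)
      thus ?thesis using Sub_mod[OF assms(1)] Sub_mod[OF assms(2)] by simp
    qed (use assms in \<open>auto simp: Sub_def\<close>)
  qed
qed simp

lemma dotp_diff: "dotp d x m - dotp d y m = dotp d m (\<lambda>i. x i - y i)"
  by (simp add: dotp_def sum_subtractf[symmetric] algebra_simps)

lemma inversion:
  assumes p2: "p \<ge> 2" and J: "finite J" "J \<subseteq> {..<d}" and y: "y \<in> Sub p J"
  shows "(\<Sum>m\<in>Sub p J. (\<Sum>x\<in>Sub p J. F x * chi p (dotp d x m)) * chi p (- dotp d y m))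
         = of_nat (card (Sub p J)) * F y"
proof -
  let ?S = "Sub p J"
  have "(\<Sum>m\<in>?S. (\<Sum>x\<in>?S. F x * chi p (dotp d x m)) * chi p (- dotp d y m))
      = (\<Sum>m\<in>?S. \<Sum>x\<in>?S. F x * chi p (dotp d m (\<lambda>i. x i - y i)))"
    by (simp add: sum_distrib_right mult.assoc chi_add[symmetric] dotp_diff[symmetric])
  also have "\<dots> = (\<Sum>x\<in>?S. F x * (\<Sum>m\<in>?S. chi p (dotp d m (\<lambda>i. x i - y i))))"
    by (subst sum.swap) (simp add: sum_distrib_left)
  also have "\<dots> = (\<Sum>x\<in>?S. if x = y then of_nat (card ?S) * F y else 0)"
    by (intro sum.cong refl) (simp add: orth[OF p2 J] Sub_dvd_eq[OF _ y])
  also have "\<dots> = of_nat (card ?S) * F y" using y Sub_finite[OF J(1)] by simp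
  finally show ?thesis .
qed


lemma delta_const:
  assumes p2: "p \<ge> 2" and J: "finite J" "J \<subseteq> {..<d}"
    and h: "\<forall>b\<in>Sub p J. (\<Sum>x\<in>Sub p J. F x * chi p (dotp d x b)) = (if b = (\<lambda>i. 0) then K else 0)"
    and y: "y \<in> Sub p J"
  shows "F y = K / of_nat (card (Sub p J))"
proof -
  have "of_nat (card (Sub p J)) * F y
     = (\<Sum>m\<in>Sub p J. (if m = (\<lambda>i. 0) then K else 0) * chi p (- dotp d y m))"
    using inversion[OF p2 J y, of F] h by simp
  also have "\<dots> = (\<Sum>m\<in>Sub p J. if m = (\<lambda>i. 0) then K else 0)"
    by (intro sum.cong refl) (simp add: dotp_def)
  also have "\<dots> = K" using Sub_finite[OF J(1)] p2 by simp
  finally show ?thesis using Sub_card_pos[OF J(1), of p] p2 by (simp add: field_simps)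
qed

lemma const_delta:
  assumes p2: "p \<ge> 2" and J: "finite J" "J \<subseteq> {..<d}"
    and h: "\<forall>m\<in>Sub p J. (\<Sum>x\<in>Sub p J. F x * chi p (dotp d x m)) = K"
    and y: "y \<in> Sub p J" "y \<noteq> (\<lambda>i. 0)"
  shows "F y = 0"
proof -
  have z: "(\<lambda>i. 0) \<in> Sub p J" using p2 by simp
  have "of_nat (card (Sub p J)) * F y = (\<Sum>m\<in>Sub p J. K * chi p (- dotp d y m))"
    using inversion[OF p2 J y(1), of F] h by simp
  also have "\<dots> = K * (\<Sum>m\<in>Sub p J. chi p (dotp d m (\<lambda>i. 0 - y i)))"
  proof -
    have "- dotp d y m = dotp d m (\<lambda>i. 0 - y i)" for m
      by (simp add: dotp_def sum_negf mult.commute)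
    thus ?thesis by (simp add: sum_distrib_left)
  qed
  also have "\<dots> = 0" using orth[OF p2 J] Sub_dvd_eq[OF z y(1)] y(2) by auto
  finally show ?thesis using Sub_card_pos[OF J(1), of p] p2 by simp
qed

definition acorr :: "nat \<Rightarrow> (nat \<Rightarrow> int) set \<Rightarrow> ((nat \<Rightarrow> int) \<Rightarrow> complex) \<Rightarrow> (nat \<Rightarrow> int) \<Rightarrow> complex" where
  "acorr p S f u = (\<Sum>x\<in>S. f (vsub p x u) * cnj (f x))"

definition ft :: "nat \<Rightarrow> nat \<Rightarrow> (nat \<Rightarrow> int) set \<Rightarrow> ((nat \<Rightarrow> int) \<Rightarrow> complex) \<Rightarrow> (nat \<Rightarrow> int) \<Rightarrow> complex" where
  "ft p d S f m = (\<Sum>x\<in>S. f x * chi p (- dotp d x m))"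

lemma acorr_ft:
  assumes p2: "p \<ge> 2" and m: "m \<in> Sub p J"
  shows "(\<Sum>u\<in>Sub p J. acorr p (Sub p J) f u * chi p (dotp d u m))
       = ft p d (Sub p J) f m * cnj (ft p d (Sub p J) f m)"
proof -
  let ?S = "Sub p J"
  have inner: "(\<Sum>u\<in>?S. f (vsub p x u) * chi p (dotp d u m)) = chi p (dotp d x m) * ft p d ?S f m"
    if x: "x \<in> ?S" for x
  proof -
    have "(\<Sum>u\<in>?S. f (vsub p x u) * chi p (dotp d u m))
        = (\<Sum>u\<in>?S. f (vsub p x u) * chi p (dotp d (vsub p x (vsub p x u)) m))"
      by (intro sum.cong refl) (simp add: vsub_vsub)
    also have "\<dots> = (\<Sum>v\<in>?S. f v * chi p (dotp d (vsub p x v) m))"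
      using sum_vsub_refl[OF _ x, of "\<lambda>v. f v * chi p (dotp d (vsub p x v) m)"] p2 by simp
    also have "\<dots> = (\<Sum>v\<in>?S. chi p (dotp d x m) * (f v * chi p (- dotp d v m)))"
      using p2 by (intro sum.cong refl) (simp add: chi_dotp_vsub chi_add[symmetric] algebra_simps)
    also have "\<dots> = chi p (dotp d x m) * ft p d ?S f m" by (simp add: ft_def sum_distrib_left)
    finally show ?thesis .
  qed
  have "(\<Sum>u\<in>?S. acorr p ?S f u * chi p (dotp d u m))
      = (\<Sum>x\<in>?S. cnj (f x) * (\<Sum>u\<in>?S. f (vsub p x u) * chi p (dotp d u m)))"
  proof -
    have "(\<Sum>u\<in>?S. acorr p ?S f u * chi p (dotp d u m))
       = (\<Sum>u\<in>?S. \<Sum>x\<in>?S. f (vsub p x u) * cnj (f x) * chi p (dotp d u m))"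
      unfolding acorr_def by (simp add: sum_distrib_right)
    also have "\<dots> = (\<Sum>x\<in>?S. \<Sum>u\<in>?S. f (vsub p x u) * cnj (f x) * chi p (dotp d u m))"
      by (rule sum.swap)
    also have "\<dots> = (\<Sum>x\<in>?S. cnj (f x) * (\<Sum>u\<in>?S. f (vsub p x u) * chi p (dotp d u m)))"
      by (simp add: sum_distrib_left mult_ac)
    finally show ?thesis .
  qed
  also have "\<dots> = (\<Sum>x\<in>?S. ft p d ?S f m * (cnj (f x) * chi p (dotp d x m)))"
    by (intro sum.cong refl) (simp add: inner algebra_simps)
  also have "\<dots> = ft p d ?S f m * cnj (ft p d ?S f m)"
    by (simp add: ft_def sum_distrib_left cnj_chi)
  finally show ?thesis .
qed

lemma acorr_equiv:
  assumes p2: "p \<ge> 2" and J: "finite J" "J \<subseteq> {..<d}"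
  shows "(\<forall>u\<in>Sub p J. u \<noteq> (\<lambda>i. 0) \<longrightarrow> acorr p (Sub p J) f u = 0)
     \<longleftrightarrow> (\<exists>C::real. \<forall>m\<in>Sub p J. cmod (ft p d (Sub p J) f m) = C)"
proof
  let ?S = "Sub p J"
  have z: "(\<lambda>i. 0) \<in> ?S" using p2 by simp
  assume h: "\<forall>u\<in>?S. u \<noteq> (\<lambda>i. 0) \<longrightarrow> acorr p ?S f u = 0"
  have "cmod (ft p d ?S f m) = sqrt (cmod (acorr p ?S f (\<lambda>i. 0)))" if m: "m \<in> ?S" for m
  proof -
    have "(\<Sum>u\<in>?S. acorr p ?S f u * chi p (dotp d u m)) = acorr p ?S f (\<lambda>i. 0)"
    proof -
      have "(\<Sum>u\<in>?S. acorr p ?S f u * chi p (dotp d u m))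
          = (\<Sum>u\<in>?S. if u = (\<lambda>i. 0) then acorr p ?S f (\<lambda>i. 0) else 0)"
        using h by (intro sum.cong refl) (auto simp: dotp_def)
      also have "\<dots> = acorr p ?S f (\<lambda>i. 0)" using z Sub_finite[OF J(1)] by simp
      finally show ?thesis .
    qed
    hence "of_real ((cmod (ft p d ?S f m))\<^sup>2) = acorr p ?S f (\<lambda>i. 0)"
      using acorr_ft[OF p2 m, of f d] complex_norm_square[of "ft p d ?S f m"] by simp
    hence "(cmod (ft p d ?S f m))\<^sup>2 = cmod (acorr p ?S f (\<lambda>i. 0))"
      by (metis norm_of_real abs_power2)
    thus ?thesis by (simp add: real_sqrt_unique)
  qed
  thus "\<exists>C::real. \<forall>m\<in>?S. cmod (ft p d ?S f m) = C" by blast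
next
  let ?S = "Sub p J"
  assume "\<exists>C::real. \<forall>m\<in>?S. cmod (ft p d ?S f m) = C"
  then obtain C where C: "\<forall>m\<in>?S. cmod (ft p d ?S f m) = C" by blast
  have "\<forall>m\<in>?S. (\<Sum>u\<in>?S. acorr p ?S f u * chi p (dotp d u m)) = of_real (C\<^sup>2)"
  proof
    fix m assume m: "m \<in> ?S"
    have "ft p d ?S f m * cnj (ft p d ?S f m) = of_real ((cmod (ft p d ?S f m))\<^sup>2)"
      by (rule complex_norm_square[symmetric])
    thus "(\<Sum>u\<in>?S. acorr p ?S f u * chi p (dotp d u m)) = of_real (C\<^sup>2)"
      using C m acorr_ft[OF p2 m] by simp
  qed
  thus "\<forall>u\<in>?S. u \<noteq> (\<lambda>i. 0) \<longrightarrow> acorr p ?S f u = 0"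
    using const_delta[OF p2 J] by blast
qed

lemma corr_shift:
  assumes p2: "p \<ge> 2" and a: "a \<in> Sub p J" and a': "a' \<in> Sub p J"
  shows "(\<Sum>x\<in>Sub p J. f (vsub p x a) * cnj (f (vsub p x a'))) = acorr p (Sub p J) f (vsub p a a')"
proof -
  have "(\<Sum>x\<in>Sub p J. f (vsub p x a) * cnj (f (vsub p x a')))
      = (\<Sum>z\<in>Sub p J. f (vsub p (vadd p z a') a) * cnj (f (vsub p (vadd p z a') a')))"
    using sum_vadd_shift[OF _ a', of "\<lambda>x. f (vsub p x a) * cnj (f (vsub p x a'))"] p2 by simp
  also have "\<dots> = acorr p (Sub p J) f (vsub p a a')"
    unfolding acorr_def
  proof (intro sum.cong refl)
    fix z assume z: "z \<in> Sub p J"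
    have "vsub p (vadd p z a') a = vsub p z (vsub p a a')"
      by (auto simp: vsub_def vadd_def mod_diff_left_eq mod_diff_right_eq algebra_simps)
    thus "f (vsub p (vadd p z a') a) * cnj (f (vsub p (vadd p z a') a')) = f (vsub p z (vsub p a a')) * cnj (f z)"
      using vsub_vadd[OF z] by simp
  qed
  finally show ?thesis .
qed

lemma corr_span:
  assumes p2: "p \<ge> 2" and x1: "x1 \<in> Sub p J" and y1: "y1 \<in> Sub p J"
  shows "(\<Sum>a\<in>Sub p J. f (vsub p x1 a) * cnj (f (vsub p y1 a))) = acorr p (Sub p J) f (vsub p y1 x1)"
proof -
  have "(\<Sum>a\<in>Sub p J. f (vsub p x1 a) * cnj (f (vsub p y1 a)))
      = (\<Sum>a\<in>Sub p J. f (vsub p x1 (vsub p y1 (vsub p y1 a))) * cnj (f (vsub p y1 a)))"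
    by (intro sum.cong refl) (simp add: vsub_vsub)
  also have "\<dots> = (\<Sum>z\<in>Sub p J. f (vsub p x1 (vsub p y1 z)) * cnj (f z))"
    using sum_vsub_refl[OF _ y1, of "\<lambda>z. f (vsub p x1 (vsub p y1 z)) * cnj (f z)"] p2 by simp
  also have "\<dots> = acorr p (Sub p J) f (vsub p y1 x1)"
    unfolding acorr_def
  proof (intro sum.cong refl)
    fix z
    have "vsub p x1 (vsub p y1 z) = vsub p z (vsub p y1 x1)"
      by (auto simp: vsub_def mod_diff_right_eq algebra_simps)
    thus "f (vsub p x1 (vsub p y1 z)) * cnj (f z) = f (vsub p z (vsub p y1 x1)) * cnj (f z)" by simp
  qed
  finally show ?thesis .
qed


lemma Zpv_Sub: "Zpv p d = Sub p {..<d}"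
  by (auto simp: Zpv_def Sub_def)

lemma A_Sub: "k \<le> d \<Longrightarrow> p > 0 \<Longrightarrow> {a \<in> Zpv p d. \<forall>i\<ge>k. a i = 0} = Sub p {..<k}"
  unfolding Zpv_def Sub_def by auto

lemma B_Sub: "p > 0 \<Longrightarrow> {b \<in> Zpv p d. \<forall>i<k. b i = 0} = Sub p {k..<d}"
  unfolding Zpv_def Sub_def by auto

definition lo :: "nat \<Rightarrow> (nat \<Rightarrow> int) \<Rightarrow> (nat \<Rightarrow> int)" where
  "lo k x = (\<lambda>i. if i < k then x i else 0)"
definition hi :: "nat \<Rightarrow> (nat \<Rightarrow> int) \<Rightarrow> (nat \<Rightarrow> int)" where
  "hi k x = (\<lambda>i. if i < k then 0 else x i)"

lemma vadd_split:
  "x1 \<in> Sub p {..<k} \<Longrightarrow> x2 \<in> Sub p {k..<d} \<Longrightarrow> vadd p x1 x2 = (\<lambda>i. x1 i + x2 i)"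
proof
  fix i assume a: "x1 \<in> Sub p {..<k}" "x2 \<in> Sub p {k..<d}"
  show "vadd p x1 x2 i = x1 i + x2 i"
  proof (cases "i < k")
    case True thus ?thesis using a Sub_mod[OF a(1), of i] by (auto simp: vadd_def Sub_def)
  next
    case False thus ?thesis using a Sub_mod[OF a(2), of i] by (auto simp: vadd_def Sub_def)
  qed
qed

lemma vadd_V: "k \<le> d \<Longrightarrow> x1 \<in> Sub p {..<k} \<Longrightarrow> x2 \<in> Sub p {k..<d} \<Longrightarrow> vadd p x1 x2 \<in> Sub p {..<d}"
  apply (simp add: vadd_split)
  apply (auto simp: Sub_def)
  subgoal for i by (cases "i < k") auto
  subgoal for i by (cases "i < k") auto
  done

lemma lo_A: "k \<le> d \<Longrightarrow> x \<in> Sub p {..<d} \<Longrightarrow> lo k x \<in> Sub p {..<k}"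
  by (auto simp: Sub_def lo_def)
lemma hi_B: "x \<in> Sub p {..<d} \<Longrightarrow> hi k x \<in> Sub p {k..<d}"
  by (auto simp: Sub_def hi_def)
lemma vadd_lo_hi: "x \<in> Sub p {..<d} \<Longrightarrow> vadd p (lo k x) (hi k x) = x"
  by (auto simp: lo_def hi_def vadd_def fun_eq_iff Sub_mod)
lemma lo_vadd: "x1 \<in> Sub p {..<k} \<Longrightarrow> x2 \<in> Sub p {k..<d} \<Longrightarrow> lo k (vadd p x1 x2) = x1"
  by (simp add: vadd_split) (auto simp: Sub_def lo_def fun_eq_iff)
lemma hi_vadd: "x1 \<in> Sub p {..<k} \<Longrightarrow> x2 \<in> Sub p {k..<d} \<Longrightarrow> hi k (vadd p x1 x2) = x2"
  by (simp add: vadd_split) (auto simp: Sub_def hi_def fun_eq_iff)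

lemma sum_decomp:
  assumes "k \<le> d"
  shows "(\<Sum>x\<in>Sub p {..<d}. h x) = (\<Sum>x1\<in>Sub p {..<k}. \<Sum>x2\<in>Sub p {k..<d}. h (vadd p x1 x2))"
proof -
  have "(\<Sum>x\<in>Sub p {..<d}. h x) = (\<Sum>z\<in>Sub p {..<k} \<times> Sub p {k..<d}. h (vadd p (fst z) (snd z)))"
    by (rule sum.reindex_bij_witness[where j="\<lambda>x. (lo k x, hi k x)" and i="\<lambda>z. vadd p (fst z) (snd z)"])
       (use assms in \<open>auto simp: lo_A hi_B vadd_lo_hi lo_vadd hi_vadd vadd_V\<close>)
  also have "\<dots> = (\<Sum>x1\<in>Sub p {..<k}. \<Sum>x2\<in>Sub p {k..<d}. h (vadd p x1 x2))"
    by (simp add: sum.cartesian_product case_prod_beta)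
  finally show ?thesis .
qed

lemma vsub_split:
  "x1 \<in> Sub p {..<k} \<Longrightarrow> a \<in> Sub p {..<k} \<Longrightarrow> x2 \<in> Sub p {k..<d} \<Longrightarrow>
   vsub p (vadd p x1 x2) a = vadd p (vsub p x1 a) x2"
  apply (auto simp: vsub_def vadd_def fun_eq_iff)
  subgoal for i by (cases "i < k") (auto simp: Sub_def mod_diff_left_eq mod_add_left_eq)
  done

lemma dotp_split:
  "x1 \<in> Sub p {..<k} \<Longrightarrow> x2 \<in> Sub p {k..<d} \<Longrightarrow> b \<in> Sub p {k..<d} \<Longrightarrow>
   dotp d (vadd p x1 x2) b = dotp d x2 b"
  unfolding dotp_def
  apply (simp add: vadd_split)
  apply (intro sum.cong refl)
  subgoal for i by (cases "i < k") (auto simp: Sub_def algebra_simps)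
  done


lemma inner_formula:
  assumes p2: "p \<ge> 2" and kd: "k \<le> d"
    and a: "a \<in> Sub p {..<k}" and a': "a' \<in> Sub p {..<k}"
    and b: "b \<in> Sub p {k..<d}" and b': "b' \<in> Sub p {k..<d}"
  shows "l2inner (Sub p {..<d}) (gabor_atom p d g a b) (gabor_atom p d g a' b')
    = (\<Sum>x2\<in>Sub p {k..<d}. acorr p (Sub p {..<k}) (\<lambda>y. g (vadd p y x2)) (vsub p a a')
         * chi p (dotp d x2 b - dotp d x2 b'))"
proof -
  let ?A = "Sub p {..<k}" and ?B = "Sub p {k..<d}"
  have "l2inner (Sub p {..<d}) (gabor_atom p d g a b) (gabor_atom p d g a' b')
     = (\<Sum>x1\<in>?A. \<Sum>x2\<in>?B. gabor_atom p d g a b (vadd p x1 x2) * cnj (gabor_atom p d g a' b' (vadd p x1 x2)))"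
    unfolding l2inner_def by (rule sum_decomp[OF kd])
  also have "\<dots> = (\<Sum>x1\<in>?A. \<Sum>x2\<in>?B. g (vadd p (vsub p x1 a) x2) * cnj (g (vadd p (vsub p x1 a') x2))
                       * chi p (dotp d x2 b - dotp d x2 b'))"
    by (intro sum.cong refl)
       (simp add: gabor_atom_def vsub_split[OF _ a] vsub_split[OF _ a'] dotp_split[OF _ _ b]
          dotp_split[OF _ _ b'] cnj_chi chi_add[symmetric] mult_ac)
  also have "\<dots> = (\<Sum>x2\<in>?B. \<Sum>x1\<in>?A. g (vadd p (vsub p x1 a) x2) * cnj (g (vadd p (vsub p x1 a') x2))
                       * chi p (dotp d x2 b - dotp d x2 b'))"
    by (rule sum.swap)
  also have "\<dots> = (\<Sum>x2\<in>?B. acorr p ?A (\<lambda>y. g (vadd p y x2)) (vsub p a a')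
         * chi p (dotp d x2 b - dotp d x2 b'))"
    by (intro sum.cong refl) (simp add: sum_distrib_right[symmetric] corr_shift[OF p2 a a', symmetric])
  finally show ?thesis .
qed

lemma kernel_formula:
  assumes p2: "p \<ge> 2" and kd: "k \<le> d"
    and x: "x \<in> Sub p {..<d}" and y: "y \<in> Sub p {..<d}"
  shows "(\<Sum>i\<in>Sub p {..<k} \<times> Sub p {k..<d}. (case i of (a, b) \<Rightarrow> gabor_atom p d g a b) x
            * cnj ((case i of (a, b) \<Rightarrow> gabor_atom p d g a b) y))
    = (if hi k x = hi k y then of_nat (card (Sub p {k..<d}))
         * acorr p (Sub p {..<k}) (\<lambda>z. g (vadd p z (hi k x))) (vsub p (lo k y) (lo k x)) else 0)"
proof -
  let ?A = "Sub p {..<k}" and ?B = "Sub p {k..<d}"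
  define x1 x2 y1 y2 where "x1 = lo k x" "x2 = hi k x" "y1 = lo k y" "y2 = hi k y"
  have x1: "x1 \<in> ?A" and y1: "y1 \<in> ?A" using x y kd by (auto simp: x1_x2_y1_y2_def lo_A)
  have x2: "x2 \<in> ?B" and y2: "y2 \<in> ?B" using x y by (auto simp: x1_x2_y1_y2_def hi_B)
  have xe: "x = vadd p x1 x2" and ye: "y = vadd p y1 y2"
    using x y by (auto simp: x1_x2_y1_y2_def vadd_lo_hi)
  have p0: "p > 0" using p2 by simp
  have "(\<Sum>i\<in>?A \<times> ?B. (case i of (a, b) \<Rightarrow> gabor_atom p d g a b) x
            * cnj ((case i of (a, b) \<Rightarrow> gabor_atom p d g a b) y))
      = (\<Sum>a\<in>?A. \<Sum>b\<in>?B. gabor_atom p d g a b x * cnj (gabor_atom p d g a b y))"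
    unfolding sum.cartesian_product by (intro sum.cong refl) (auto split: prod.splits)
  also have "\<dots> = (\<Sum>a\<in>?A. \<Sum>b\<in>?B. (g (vadd p (vsub p x1 a) x2) * cnj (g (vadd p (vsub p y1 a) y2)))
                       * chi p (dotp d b (\<lambda>i. x2 i - y2 i)))"
    by (intro sum.cong refl)
      (simp add: gabor_atom_def xe ye vsub_split[OF x1 _ x2] vsub_split[OF y1 _ y2]
          dotp_split[OF x1 x2] dotp_split[OF y1 y2] cnj_chi chi_add[symmetric] dotp_diff[symmetric] mult_ac)
  also have "\<dots> = (\<Sum>a\<in>?A. g (vadd p (vsub p x1 a) x2) * cnj (g (vadd p (vsub p y1 a) y2)))
                  * (\<Sum>b\<in>?B. chi p (dotp d b (\<lambda>i. x2 i - y2 i)))"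
    by (simp add: sum_product)
  also have "(\<Sum>b\<in>?B. chi p (dotp d b (\<lambda>i. x2 i - y2 i))) = (if x2 = y2 then of_nat (card ?B) else 0)"
    using orth[OF p2 finite_atLeastLessThan[of k d] _, of d "\<lambda>i. x2 i - y2 i"] Sub_dvd_eq[OF x2 y2]
    by (auto simp: subset_eq)
  also have "(\<Sum>a\<in>?A. g (vadd p (vsub p x1 a) x2) * cnj (g (vadd p (vsub p y1 a) y2))) * (if x2 = y2 then of_nat (card ?B) else 0)
     = (if x2 = y2 then of_nat (card ?B) * acorr p ?A (\<lambda>z. g (vadd p z x2)) (vsub p y1 x1) else 0)"
    using corr_span[OF p2 x1 y1, of "\<lambda>z. g (vadd p z x2)"] by auto
  finally show ?thesis by (simp add: x1_x2_y1_y2_def)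
qed


theorem theorem1p6:
  fixes p d k :: nat and g :: "(nat \<Rightarrow> int) \<Rightarrow> complex"
  assumes "prime p" and "d \<ge> 2" and "1 \<le> k" and "k < d"
    and "(\<Sum>x\<in>Zpv p d. (cmod (g x))\<^sup>2) = 1"
  shows "gabor_onb p d g {a \<in> Zpv p d. \<forall>i\<ge>k. a i = 0} {b \<in> Zpv p d. \<forall>i<k. b i = 0}
    \<longleftrightarrow>
    ((\<forall>x2\<in>{y \<in> Zpv p d. \<forall>i<k. y i = 0}. \<exists>C::real. \<forall>m\<in>{y \<in> Zpv p d. \<forall>i\<ge>k. y i = 0}.
        cmod (\<Sum>x1\<in>{y \<in> Zpv p d. \<forall>i\<ge>k. y i = 0}. g (vadd p x1 x2) * chi p (- dotp d x1 m)) = C)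
     \<and>
     (\<exists>C::real. \<forall>x2\<in>{y \<in> Zpv p d. \<forall>i<k. y i = 0}.
        (\<Sum>x1\<in>{y \<in> Zpv p d. \<forall>i\<ge>k. y i = 0}. (cmod (g (vadd p x1 x2)))\<^sup>2) = C))"
proof -
  have p2: "p \<ge> 2" using assms(1) prime_ge_2_nat by blast
  hence p0: "p > 0" by simp
  have kd: "k \<le> d" using assms(4) by simp
  let ?A = "Sub p {..<k}" and ?B = "Sub p {k..<d}" and ?V = "Sub p {..<d}"
  have JA: "finite {..<k}" "{..<k} \<subseteq> {..<d}" using kd by auto
  have JB: "finite {k..<d}" "{k..<d} \<subseteq> {..<d}" by auto
  have zA: "(\<lambda>i. 0) \<in> ?A" and zB: "(\<lambda>i. 0) \<in> ?B" using p0 by auto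
  define F where "F = (\<lambda>x2 y. g (vadd p y x2))"
  define e where "e = (\<lambda>(a, b). gabor_atom p d g a b)"
  have hA: "{a \<in> Zpv p d. \<forall>i\<ge>k. a i = 0} = ?A" by (rule A_Sub[OF kd p0])
  have hB: "{b \<in> Zpv p d. \<forall>i<k. b i = 0} = ?B" by (rule B_Sub[OF p0])
  have hV: "Zpv p d = ?V" by (rule Zpv_Sub)
  have acorr0: "acorr p ?A (F x2) (\<lambda>i. 0) = of_real (\<Sum>x1\<in>?A. (cmod (g (vadd p x1 x2)))\<^sup>2)" for x2
    unfolding acorr_def F_def of_real_sum
    by (intro sum.cong refl) (simp add: vsub_zero, metis complex_norm_square of_real_power)
  have norm: "(\<Sum>x2\<in>?B. \<Sum>x1\<in>?A. (cmod (g (vadd p x1 x2)))\<^sup>2) = 1"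
    using assms(5) unfolding hV sum_decomp[OF kd] by (subst sum.swap) simp
  have condA: "(\<forall>x2\<in>?B. \<exists>C::real. \<forall>m\<in>?A. cmod (\<Sum>x1\<in>?A. g (vadd p x1 x2) * chi p (- dotp d x1 m)) = C)
     \<longleftrightarrow> (\<forall>x2\<in>?B. \<forall>u\<in>?A. u \<noteq> (\<lambda>i. 0) \<longrightarrow> acorr p ?A (F x2) u = 0)"
    using acorr_equiv[OF p2 JA] by (simp add: ft_def F_def)
  have inner: "l2inner ?V (e (a, b)) (e (a', b'))
    = (\<Sum>x2\<in>?B. acorr p ?A (F x2) (vsub p a a') * chi p (dotp d x2 b - dotp d x2 b'))"
    if "a \<in> ?A" "a' \<in> ?A" "b \<in> ?B" "b' \<in> ?B" for a a' b b'
    using inner_formula[OF p2 kd that, of g] by (simp add: e_def F_def)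
  show ?thesis
    unfolding hA hB
    unfolding hV gabor_onb_def is_onb_def condA e_def[symmetric]
  proof (intro iffI conjI)
    assume onb: "(\<forall>i\<in>?A \<times> ?B. \<forall>j\<in>?A \<times> ?B. l2inner ?V (e i) (e j) = (if i = j then 1 else 0)) \<and>
        (\<forall>f. \<exists>c. \<forall>x\<in>?V. f x = (\<Sum>i\<in>?A \<times> ?B. c i * e i x))"
    have val: "acorr p ?A (F y) (vsub p a a') = (if a = a' then 1 else 0) / of_nat (card ?B)"
      if a: "a \<in> ?A" and a': "a' \<in> ?A" and y: "y \<in> ?B" for a a' y
    proof (rule delta_const[OF p2 JB _ y, where F="\<lambda>x2. acorr p ?A (F x2) (vsub p a a')"])
      show "\<forall>b\<in>?B. (\<Sum>x2\<in>?B. acorr p ?A (F x2) (vsub p a a') * chi p (dotp d x2 b))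
          = (if b = (\<lambda>i. 0) then (if a = a' then 1 else 0) else 0)"
      proof
        fix b assume b: "b \<in> ?B"
        have o1: "l2inner ?V (e (a, b)) (e (a', \<lambda>i. 0)) = (if (a, b) = (a', \<lambda>i. 0) then 1 else 0)"
          using bspec[OF bspec[OF conjunct1[OF onb]], of "(a, b)" "(a', \<lambda>i. 0)"] a a' b zB by simp
        show "(\<Sum>x2\<in>?B. acorr p ?A (F x2) (vsub p a a') * chi p (dotp d x2 b))
          = (if b = (\<lambda>i. 0) then (if a = a' then 1 else 0) else 0)"
        proof -
          have "dotp d x2 (\<lambda>i. 0) = 0" for x2 by (simp add: dotp_def)
          hence "(\<Sum>x2\<in>?B. acorr p ?A (F x2) (vsub p a a') * chi p (dotp d x2 b)) = (if (a, b) = (a', \<lambda>i. 0) then 1 else 0)"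
            using trans[OF sym[OF inner[OF a a' b zB]] o1] by simp
          thus ?thesis by simp
        qed
      qed
    qed
    show "\<forall>x2\<in>?B. \<forall>u\<in>?A. u \<noteq> (\<lambda>i. 0) \<longrightarrow> acorr p ?A (F x2) u = 0"
    proof (intro ballI impI)
      fix x2 u assume x2: "x2 \<in> ?B" and u: "u \<in> ?A" "u \<noteq> (\<lambda>i. 0)"
      show "acorr p ?A (F x2) u = 0" using val[OF u(1) zA x2] vsub_zero[OF u(1)] u(2) by simp
    qed
    show "\<exists>C::real. \<forall>x2\<in>?B. (\<Sum>x1\<in>?A. (cmod (g (vadd p x1 x2)))\<^sup>2) = C"
    proof (intro exI ballI)
      fix x2 assume x2: "x2 \<in> ?B"
      have "of_real (\<Sum>x1\<in>?A. (cmod (g (vadd p x1 x2)))\<^sup>2) = (of_real (1 / real (card ?B)) :: complex)"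
        using val[OF zA zA x2] acorr0[of x2] vsub_zero[OF zA] by simp
      thus "(\<Sum>x1\<in>?A. (cmod (g (vadd p x1 x2)))\<^sup>2) = 1 / real (card ?B)"
        by (simp only: of_real_eq_iff)
    qed
  next
    assume H: "(\<forall>x2\<in>?B. \<forall>u\<in>?A. u \<noteq> (\<lambda>i. 0) \<longrightarrow> acorr p ?A (F x2) u = 0) \<and>
       (\<exists>C::real. \<forall>x2\<in>?B. (\<Sum>x1\<in>?A. (cmod (g (vadd p x1 x2)))\<^sup>2) = C)"
    then obtain C where C: "\<forall>x2\<in>?B. (\<Sum>x1\<in>?A. (cmod (g (vadd p x1 x2)))\<^sup>2) = C" by blast
    have CB: "of_nat (card ?B) * C = 1" using norm C by simp
    have "(of_real (real (card ?B) * C) :: complex) = 1" using CB by simp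
    hence CB': "of_nat (card ?B) * (of_real C :: complex) = 1" by simp
    have acv: "acorr p ?A (F x2) u = (if u = (\<lambda>i. 0) then of_real C else 0)"
      if "x2 \<in> ?B" "u \<in> ?A" for x2 u
      using H that acorr0[of x2] C by auto
    show "\<forall>i\<in>?A \<times> ?B. \<forall>j\<in>?A \<times> ?B. l2inner ?V (e i) (e j) = (if i = j then 1 else 0)"
    proof (intro ballI)
      fix i j assume i: "i \<in> ?A \<times> ?B" and j: "j \<in> ?A \<times> ?B"
      obtain a b where ab: "i = (a, b)" "a \<in> ?A" "b \<in> ?B" using i by auto
      obtain a' b' where ab': "j = (a', b')" "a' \<in> ?A" "b' \<in> ?B" using j by auto
      have sB: "(\<Sum>x2\<in>?B. chi p (dotp d x2 b - dotp d x2 b')) = (if b = b' then of_nat (card ?B) else 0)"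
      proof -
        have "(\<Sum>x2\<in>?B. chi p (dotp d x2 b - dotp d x2 b')) = (\<Sum>x2\<in>?B. chi p (dotp d x2 (\<lambda>i. b i - b' i)))"
          by (simp add: dotp_commute[of d _ b] dotp_commute[of d _ b'] dotp_diff)
        thus ?thesis using orth[OF p2 JB, of "\<lambda>i. b i - b' i"] Sub_dvd_eq[OF ab(3) ab'(3)] by auto
      qed
      have "l2inner ?V (e i) (e j) = (\<Sum>x2\<in>?B. (if a = a' then of_real C else 0) * chi p (dotp d x2 b - dotp d x2 b'))"
        unfolding ab ab' inner[OF ab(2) ab'(2) ab(3) ab'(3)]
        by (intro sum.cong refl) (simp add: acv vsub_Sub[OF p0 ab(2) ab'(2)] vsub_eq_0_iff[OF ab(2) ab'(2)])
      also have "\<dots> = (if a = a' then of_real C * (\<Sum>x2\<in>?B. chi p (dotp d x2 b - dotp d x2 b')) else 0)"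
        by (simp add: sum_distrib_left)
      also have "\<dots> = (if i = j then 1 else 0)"
        using sB CB' by (simp add: ab ab' mult.commute)
      finally show "l2inner ?V (e i) (e j) = (if i = j then 1 else 0)" .
    qed
    have kern: "(\<Sum>i\<in>?A \<times> ?B. e i x * cnj (e i y)) = (if x = y then 1 else 0)"
      if x: "x \<in> ?V" and y: "y \<in> ?V" for x y
    proof -
      have "(\<Sum>i\<in>?A \<times> ?B. e i x * cnj (e i y))
        = (if hi k x = hi k y then of_nat (card ?B) * acorr p ?A (F (hi k x)) (vsub p (lo k y) (lo k x)) else 0)"
        using kernel_formula[OF p2 kd x y, of g] by (simp add: e_def F_def)
      also have "\<dots> = (if x = y then 1 else 0)"
      proof -
        have lx: "lo k x \<in> ?A" "lo k y \<in> ?A" using x y kd by (auto simp: lo_A)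
        have "x = y \<longleftrightarrow> lo k x = lo k y \<and> hi k x = hi k y"
          using vadd_lo_hi[OF x, of k] vadd_lo_hi[OF y, of k] by metis
        moreover have "hi k x \<in> ?B" using x by (simp add: hi_B)
        ultimately show ?thesis
          using acv vsub_Sub[OF p0 lx(2) lx(1)] vsub_eq_0_iff[OF lx(2) lx(1)] CB'
          by (auto simp: acv)
      qed
      finally show ?thesis .
    qed
    show "\<forall>f. \<exists>c. \<forall>x\<in>?V. f x = (\<Sum>i\<in>?A \<times> ?B. c i * e i x)"
    proof
      fix f :: "(nat \<Rightarrow> int) \<Rightarrow> complex"
      show "\<exists>c. \<forall>x\<in>?V. f x = (\<Sum>i\<in>?A \<times> ?B. c i * e i x)"
      proof (intro exI ballI)
        fix x assume x: "x \<in> ?V"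
        have "(\<Sum>i\<in>?A \<times> ?B. (\<Sum>y\<in>?V. f y * cnj (e i y)) * e i x)
            = (\<Sum>y\<in>?V. f y * (\<Sum>i\<in>?A \<times> ?B. e i x * cnj (e i y)))"
          by (simp add: sum_distrib_right sum_distrib_left mult_ac) (rule sum.swap)
        also have "\<dots> = (\<Sum>y\<in>?V. if y = x then f x else 0)"
          by (intro sum.cong refl) (auto simp: kern[OF x])
        also have "\<dots> = f x" using x Sub_finite[of "{..<d}" p] by simp
        finally show "f x = (\<Sum>i\<in>?A \<times> ?B. (\<Sum>y\<in>?V. f y * cnj (e i y)) * e i x)" by simp
      qed
    qed
  qed
qed

end
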